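(* Let $R$ be a ring and $I$ a regular ideal of $R$ such that idempotents lift modulo $I$. Then $R$ is weakly $r$-clean if and only if $R/I$ is weakly $r$-clean.
   Context: Rings are associative with identity. $Idem(R)$ denotes the idempotents and $Reg(R)=\{r\in R: r=ryr \text{ for some } y\in R\}$ the (von Neumann) regular elements. An ideal $I$ is regular if every element of $I$ is a regular element. Idempotents lift modulo $I$ if for every $x\in R$ with $x^2-x\in I$ there is $e\in Idem(R)$ with $e-x\in I$. An element $x$ is weakly $r$-clean if $x=r+e$ or $x=r-e$ for some $r\in Reg(R)$, $e\in Idem(R)$; a ring is weakly $r$-clean if all its elements are. *)

theory Defs
  imports "HOL-Algebra.QuotRing"
begin

definition Idems :: "('a, 'b) ring_scheme \<Rightarrow> 'a set" where
  "Idems S = {e \<in> carrier S. mult S e e = e}"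

definition Regs :: "('a, 'b) ring_scheme \<Rightarrow> 'a set" where
  "Regs S = {r \<in> carrier S. \<exists>y \<in> carrier S. r = mult S (mult S r y) r}"

definition regular_ideal :: "('a, 'b) ring_scheme \<Rightarrow> 'a set \<Rightarrow> bool" where
  "regular_ideal S I \<longleftrightarrow> ideal I S \<and> I \<subseteq> Regs S"

definition idempotents_lift :: "('a, 'b) ring_scheme \<Rightarrow> 'a set \<Rightarrow> bool" where
  "idempotents_lift S I \<longleftrightarrow>
     (\<forall>x \<in> carrier S. a_minus S (mult S x x) x \<in> I \<longrightarrow>
        (\<exists>e \<in> Idems S. a_minus S e x \<in> I))"

definition weakly_r_clean_elem :: "('a, 'b) ring_scheme \<Rightarrow> 'a \<Rightarrow> bool" where
  "weakly_r_clean_elem S x \<longleftrightarrow>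
     (\<exists>r \<in> Regs S. \<exists>e \<in> Idems S. x = add S r e \<or> x = a_minus S r e)"

definition weakly_r_clean :: "('a, 'b) ring_scheme \<Rightarrow> bool" where
  "weakly_r_clean S \<longleftrightarrow> (\<forall>x \<in> carrier S. weakly_r_clean_elem S x)"

end

theory Submission
  imports Defs
begin

lemma (in ring) reg_lift_alg:
  assumes s: "s \<in> carrier R" and y: "y \<in> carrier R" and z: "z \<in> carrier R"
    and a: "s \<ominus> s \<otimes> y \<otimes> s = (s \<ominus> s \<otimes> y \<otimes> s) \<otimes> z \<otimes> (s \<ominus> s \<otimes> y \<otimes> s)"
  shows "s \<in> Regs R"
proof -
  define w where "w = y \<oplus> (\<one> \<ominus> y \<otimes> s) \<otimes> z \<otimes> (\<one> \<ominus> s \<otimes> y)"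
  have w: "w \<in> carrier R" using s y z by (simp add: w_def)
  have e1: "s \<otimes> (\<one> \<ominus> y \<otimes> s) = s \<ominus> s \<otimes> y \<otimes> s"
    using s y by (simp add: minus_eq r_distr r_minus m_assoc)
  have e2: "(\<one> \<ominus> s \<otimes> y) \<otimes> s = s \<ominus> s \<otimes> y \<otimes> s"
    using s y by (simp add: minus_eq l_distr l_minus m_assoc)
  have "s \<otimes> w \<otimes> s = s \<otimes> y \<otimes> s \<oplus> s \<otimes> ((\<one> \<ominus> y \<otimes> s) \<otimes> z \<otimes> (\<one> \<ominus> s \<otimes> y)) \<otimes> s"
    using s y z by (simp add: w_def r_distr l_distr)
  also have "s \<otimes> ((\<one> \<ominus> y \<otimes> s) \<otimes> z \<otimes> (\<one> \<ominus> s \<otimes> y)) \<otimes> s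
      = (s \<otimes> (\<one> \<ominus> y \<otimes> s)) \<otimes> z \<otimes> ((\<one> \<ominus> s \<otimes> y) \<otimes> s)"
    using s y z by (simp add: m_assoc)
  also have "\<dots> = s \<ominus> s \<otimes> y \<otimes> s" using e1 e2 a by simp
  also have "s \<otimes> y \<otimes> s \<oplus> (s \<ominus> s \<otimes> y \<otimes> s) = s"
    using s y by (simp add: minus_eq a_lcomm r_neg)
  finally have "s \<otimes> w \<otimes> s = s" .
  then show ?thesis using s w unfolding Regs_def by (auto intro!: bexI[of _ w])
qed


lemma quot_carrier_rep:
  assumes "ideal I R" "X \<in> carrier (R Quot I)"
  shows "\<exists>a \<in> carrier R. X = I +>\<^bsub>R\<^esub> a"
  using assms(2) unfolding FactRing_def A_RCOSETS_def RCOSETS_def a_r_coset_def by auto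

lemma quot_eq_iff:
  assumes "ideal I R" "a \<in> carrier R" "b \<in> carrier R"
  shows "(I +>\<^bsub>R\<^esub> a = I +>\<^bsub>R\<^esub> b) \<longleftrightarrow> a \<ominus>\<^bsub>R\<^esub> b \<in> I"
proof -
  interpret ideal I R by fact
  show ?thesis
  proof
    assume "I +>\<^bsub>R\<^esub> a = I +>\<^bsub>R\<^esub> b"
    then have "a \<in> I +>\<^bsub>R\<^esub> b" using assms a_repr_independenceD by metis
    then show "a \<ominus>\<^bsub>R\<^esub> b \<in> I" using assms a_rcos_module_minus[OF ring_axioms] by blast
  next
    assume "a \<ominus>\<^bsub>R\<^esub> b \<in> I"
    then have "a \<in> I +>\<^bsub>R\<^esub> b" using assms a_rcos_module_minus[OF ring_axioms] by blast
    then show "I +>\<^bsub>R\<^esub> a = I +>\<^bsub>R\<^esub> b" using assms a_repr_independence' by metis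
  qed
qed

lemma (in ring) main_aux:
  assumes "True"
    and "ideal I R"
    and "regular_ideal R I"
    and "idempotents_lift R I"
  shows "weakly_r_clean R \<longleftrightarrow> weakly_r_clean (R Quot I)"
proof -
  interpret ideal I R by fact
  interpret Q: ring "R Quot I" by (rule quotient_is_ring)
  interpret H: ring_hom_ring R "R Quot I" "a_r_coset R I" by (rule rcos_ring_hom_ring)
  let ?h = "a_r_coset R I"
  have hminus: "a_minus (R Quot I) (?h a) (?h b) = ?h (a \<ominus> b)"
    if "a \<in> carrier R" "b \<in> carrier R" for a b
    using that by (simp add: minus_eq Q.minus_eq)
  show ?thesis
  proof
    assume wc: "weakly_r_clean R"
    show "weakly_r_clean (R Quot I)"
      unfolding weakly_r_clean_def
    proof
      fix X assume "X \<in> carrier (R Quot I)"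
      then obtain x where x: "x \<in> carrier R" "X = ?h x"
        using quot_carrier_rep[OF assms(2)] by blast
      then obtain r e where r: "r \<in> Regs R" and e: "e \<in> Idems R"
        and xe: "x = r \<oplus> e \<or> x = r \<ominus> e"
        using wc unfolding weakly_r_clean_def weakly_r_clean_elem_def by blast
      from r obtain t where rc: "r \<in> carrier R" and t: "t \<in> carrier R" and rt: "r = r \<otimes> t \<otimes> r"
        unfolding Regs_def by auto
      from e have ec: "e \<in> carrier R" and ee: "e \<otimes> e = e" unfolding Idems_def by auto
      have "?h r = ?h (r \<otimes> t \<otimes> r)" using rt by simp
      also have "\<dots> = mult (R Quot I) (mult (R Quot I) (?h r) (?h t)) (?h r)"
        using rc t by simp
      finally have hr: "?h r \<in> Regs (R Quot I)"
        unfolding Regs_def using rc t by (intro CollectI conjI bexI[of _ "?h t"]) auto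
      have he: "?h e \<in> Idems (R Quot I)"
        unfolding Idems_def using ec by (simp flip: H.hom_mult add: ee)
      show "weakly_r_clean_elem (R Quot I) X"
        unfolding weakly_r_clean_elem_def
        using xe
      proof
        assume "x = r \<oplus> e"
        then have "X = add (R Quot I) (?h r) (?h e)" using x rc ec by simp
        then show "\<exists>ra\<in>Regs (R Quot I). \<exists>ea\<in>Idems (R Quot I). X = add (R Quot I) ra ea \<or> X = a_minus (R Quot I) ra ea"
          using hr he by blast
      next
        assume "x = r \<ominus> e"
        then have "X = a_minus (R Quot I) (?h r) (?h e)" using x rc ec hminus by simp
        then show "\<exists>ra\<in>Regs (R Quot I). \<exists>ea\<in>Idems (R Quot I). X = add (R Quot I) ra ea \<or> X = a_minus (R Quot I) ra ea"
          using hr he by blast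
      qed
    qed
  next
    assume wc: "weakly_r_clean (R Quot I)"
    show "weakly_r_clean R"
      unfolding weakly_r_clean_def
    proof
      fix x assume x: "x \<in> carrier R"
      have "?h x \<in> carrier (R Quot I)" using x by simp
      then obtain \<rho> \<epsilon> where \<rho>: "\<rho> \<in> Regs (R Quot I)" and \<epsilon>: "\<epsilon> \<in> Idems (R Quot I)"
        and xe: "?h x = add (R Quot I) \<rho> \<epsilon> \<or> ?h x = a_minus (R Quot I) \<rho> \<epsilon>"
        using wc unfolding weakly_r_clean_def weakly_r_clean_elem_def by blast
      from \<epsilon> obtain e where ec: "e \<in> carrier R" and eq: "\<epsilon> = ?h e"
        unfolding Idems_def using quot_carrier_rep[OF assms(2)] by blast
      from \<epsilon> have "?h (e \<otimes> e) = ?h e" unfolding Idems_def eq using ec by simp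
      then have "e \<otimes> e \<ominus> e \<in> I" using quot_eq_iff[OF assms(2), of "e \<otimes> e" e] ec by blast
      then obtain f where f: "f \<in> Idems R" and fe: "f \<ominus> e \<in> I"
        using assms(4) ec unfolding idempotents_lift_def by blast
      have fc: "f \<in> carrier R" using f unfolding Idems_def by auto
      have hf: "?h f = \<epsilon>" using fe quot_eq_iff[OF assms(2)] fc ec eq by simp
      from \<rho> obtain \<eta> where \<rho>c: "\<rho> \<in> carrier (R Quot I)" and \<eta>: "\<eta> \<in> carrier (R Quot I)"
        and \<rho>\<eta>: "\<rho> = mult (R Quot I) (mult (R Quot I) \<rho> \<eta>) \<rho>"
        unfolding Regs_def by auto
      from \<eta> obtain y where yc: "y \<in> carrier R" and yeq: "\<eta> = ?h y"
        using quot_carrier_rep[OF assms(2)] by blast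
      have \<epsilon>c: "\<epsilon> \<in> carrier (R Quot I)" using \<epsilon> unfolding Idems_def by auto
      have key: "s \<in> Regs R" if sc: "s \<in> carrier R" and hs: "?h s = \<rho>" for s
      proof -
        have "?h s = ?h (s \<otimes> y \<otimes> s)" using \<rho>\<eta> hs yeq sc yc by simp
        then have "s \<ominus> s \<otimes> y \<otimes> s \<in> I" using quot_eq_iff[OF assms(2), of s "s \<otimes> y \<otimes> s"] sc yc by blast
        then have "s \<ominus> s \<otimes> y \<otimes> s \<in> Regs R" using assms(3) unfolding regular_ideal_def by auto
        then obtain z where zc: "z \<in> carrier R"
          and "s \<ominus> s \<otimes> y \<otimes> s = (s \<ominus> s \<otimes> y \<otimes> s) \<otimes> z \<otimes> (s \<ominus> s \<otimes> y \<otimes> s)"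
          unfolding Regs_def by auto
        then show ?thesis using reg_lift_alg[OF sc yc zc] by blast
      qed
      show "weakly_r_clean_elem R x"
        unfolding weakly_r_clean_elem_def
        using xe
      proof
        assume h1: "?h x = add (R Quot I) \<rho> \<epsilon>"
        have sc: "x \<ominus> f \<in> carrier R" using x fc by simp
        have "?h (x \<ominus> f) = \<rho>"
          using hminus[OF x fc] h1 hf \<rho>c \<epsilon>c by (simp add: Q.minus_eq Q.a_assoc Q.r_neg)
        then have "x \<ominus> f \<in> Regs R" using key sc by blast
        moreover have "x = (x \<ominus> f) \<oplus> f" using x fc by (simp add: minus_eq a_assoc l_neg r_neg)
        ultimately show "\<exists>r\<in>Regs R. \<exists>e\<in>Idems R. x = r \<oplus> e \<or> x = r \<ominus> e" using f by blast
      next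
        assume h1: "?h x = a_minus (R Quot I) \<rho> \<epsilon>"
        have sc: "x \<oplus> f \<in> carrier R" using x fc by simp
        have "?h (x \<oplus> f) = \<rho>"
          using h1 hf \<rho>c \<epsilon>c x fc by (simp add: Q.minus_eq Q.a_assoc Q.l_neg)
        then have "x \<oplus> f \<in> Regs R" using key sc by blast
        moreover have "x = (x \<oplus> f) \<ominus> f" using x fc by (simp add: minus_eq a_assoc l_neg r_neg)
        ultimately show "\<exists>r\<in>Regs R. \<exists>e\<in>Idems R. x = r \<oplus> e \<or> x = r \<ominus> e" using f by blast
      qed
    qed
  qed
qed

theorem theorem2p15:
  fixes R :: "('a, 'b) ring_scheme" and I :: "'a set"
  assumes "ring R"
    and "ideal I R"
    and "regular_ideal R I"
    and "idempotents_lift R I"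
  shows "weakly_r_clean R \<longleftrightarrow> weakly_r_clean (R Quot I)"
  using ring.main_aux[OF assms(1) _ assms(2-4)] by simp

end
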